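(* Let $|\cdot|$ be a measurable norm on a separable, infinite-dimensional, real Hilbert space $H$, and let $M_0\subset H$ be a closed subspace with $\dim M_0=\infty$. Then there is a measurably adapted sequence $(F_n)_{n\geq1}$ of closed subspaces of $H$ with $F_1\supset F_0:=M_0^\perp$ and $\dim(F_1\cap M_0)<\infty$. Moreover, the linear span of the subspaces $F_n\cap F_{n-1}^\perp$, $n\geq 1$, is dense in $M_0$.
   Context: A norm $|\cdot|$ on a real separable Hilbert space $H$ is a measurable norm if for every $\epsilon>0$ there is a finite-dimensional subspace $F_0\subset H$ such that $\mathrm{Gauss}[v\in F_1: |v|>\epsilon]<\epsilon$ for every finite-dimensional subspace $F_1\subset H$ orthogonal to $F_0$, where $\mathrm{Gauss}$ is standard Gaussian measure on $F_1$. A sequence $(F_n)_{n\geq1}$ of closed subspaces of $H$ is measurably adapted if: (i) $F_1\subset F_2\subset\cdots$; (ii) $1\leq\dim(F_{n+1}\cap F_n^\perp)<\infty$ for all $n\ge1$; (iii) $\bigcup_n F_n$ is dense in $H$; (iv) for every $n\ge1$, $\mathrm{Gauss}[v\in F_{n+1}\cap F_n^\perp: |v|>2^{-n}]<2^{-n}$, with $\mathrm{Gauss}$ the standard Gaussian measure on $F_{n+1}\cap F_n^\perp$. *)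

theory Defs
  imports "HOL-Analysis.Analysis" "HOL-Probability.Probability"
begin

text \<open>A (not necessarily continuous) norm on a real vector space.\<close>
definition is_norm :: "('a::real_vector \<Rightarrow> real) \<Rightarrow> bool" where
  "is_norm N \<longleftrightarrow> (\<forall>x y. N (x + y) \<le> N x + N y) \<and> (\<forall>c x. N (c *\<^sub>R x) = \<bar>c\<bar> * N x)
     \<and> (\<forall>x. N x = 0 \<longrightarrow> x = 0)"

definition fin_dim_subspace :: "'a::real_vector set \<Rightarrow> bool" where
  "fin_dim_subspace F \<longleftrightarrow> subspace F \<and> (\<exists>B. finite B \<and> span B = F)"

definition onb_list :: "'a::real_inner set \<Rightarrow> 'a list" where
  "onb_list F = (SOME e. (\<forall>i<length e. \<forall>j<length e. e!i \<bullet> e!j = (if i = j then 1 else 0))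
                          \<and> span (set e) = F)"

text \<open>Standard Gaussian measure on a finite-dimensional subspace F of the set A:
  the law of the sum of g_i e_i, with (e_i) an orthonormal basis of F and g_i iid N(0,1).
  (By rotation invariance this does not depend on the chosen basis.)\<close>
definition gauss :: "'a::real_inner set \<Rightarrow> 'a set \<Rightarrow> real" where
  "gauss F A = (let e = onb_list F; k = length e;
                    M = PiM {..<k} (\<lambda>_. density lborel std_normal_density)
                in measure M {x \<in> space M. (\<Sum>i<k. x i *\<^sub>R e!i) \<in> A})"

definition measurable_norm :: "('a::real_inner \<Rightarrow> real) \<Rightarrow> bool" where
  "measurable_norm N \<longleftrightarrow> is_norm N \<and>
     (\<forall>\<epsilon>>0. \<exists>F0. fin_dim_subspace F0 \<and>
        (\<forall>F1. fin_dim_subspace F1 \<and> F1 \<subseteq> orthogonal_comp F0 \<longrightarrow>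
              gauss F1 {v \<in> F1. N v > \<epsilon>} < \<epsilon>))"

text \<open>Measurably adapted sequence (F n) for n \<ge> 1 (the value F 0 is irrelevant here).\<close>
definition measurably_adapted :: "('a::real_inner \<Rightarrow> real) \<Rightarrow> (nat \<Rightarrow> 'a set) \<Rightarrow> bool" where
  "measurably_adapted N F \<longleftrightarrow>
     (\<forall>n\<ge>1. closed (F n) \<and> subspace (F n)) \<and>
     (\<forall>n\<ge>1. F n \<subseteq> F (Suc n)) \<and>
     (\<forall>n\<ge>1. fin_dim_subspace (F (Suc n) \<inter> orthogonal_comp (F n))
            \<and> 1 \<le> dim (F (Suc n) \<inter> orthogonal_comp (F n))) \<and>
     closure (\<Union>n\<in>{1..}. F n) = UNIV \<and>
     (\<forall>n\<ge>1. gauss (F (Suc n) \<inter> orthogonal_comp (F n))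
              {v \<in> F (Suc n) \<inter> orthogonal_comp (F n). N v > 1 / 2 ^ n} < 1 / 2 ^ n)"

end

theory Submission
  imports Defs
begin

lemma proj_exists:
  fixes x :: "'a::{real_inner,complete_space}"
  assumes M: "closed M" "subspace M"
  shows "\<exists>p\<in>M. \<forall>m\<in>M. (x - p) \<bullet> m = 0"
proof -
  define D where "D = (\<lambda>m. norm (x - m)) ` M"
  have D0: "D \<noteq> {}" using subspace_0[OF M(2)] D_def by auto
  have bdd: "bdd_below D" by (auto simp: D_def intro!: bdd_belowI[of _ 0])
  define d where "d = Inf D"
  have dle: "d \<le> norm (x - m)" if "m \<in> M" for m
    using cInf_lower[OF _ bdd] that d_def D_def by auto
  have d0: "0 \<le> d" unfolding d_def using D0 by (auto intro!: cInf_greatest simp: D_def)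
  have "\<exists>y\<in>M. norm (x - y) < d + inverse (real (Suc k))" for k
  proof -
    have "Inf D < d + inverse (real (Suc k))" by (simp add: d_def)
    then obtain t where "t \<in> D" "t < d + inverse (real (Suc k))" using cInf_lessD[OF D0] by blast
    then show ?thesis by (auto simp: D_def)
  qed
  then obtain y where yM: "\<And>k. y k \<in> M" and yl: "\<And>k. norm (x - y k) < d + inverse (real (Suc k))"
    by metis
  have para: "(norm (y j - y k))^2 \<le> 2*(d + inverse (real (Suc j)))^2 + 2*(d + inverse (real (Suc k)))^2 - 4*d^2" for j k
  proof -
    let ?a = "x - y k" and ?b = "x - y j"
    have id: "(norm (?a - ?b))^2 + (norm (?a + ?b))^2 = 2*(norm ?a)^2 + 2*(norm ?b)^2"
      by (simp add: power2_norm_eq_inner inner_diff inner_add inner_commute algebra_simps)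
    have mid: "(1/2) *\<^sub>R (y j + y k) \<in> M"
      using M(2) yM by (simp add: subspace_add subspace_scale)
    have "?a + ?b = 2 *\<^sub>R (x - (1/2) *\<^sub>R (y j + y k))" by (simp add: algebra_simps scaleR_2)
    then have "norm (?a + ?b) = 2 * norm (x - (1/2) *\<^sub>R (y j + y k))" by simp
    then have "norm (?a + ?b) \<ge> 2 * d" using dle[OF mid] by simp
    then have "(2*d)^2 \<le> (norm (?a + ?b))^2" using d0 by (intro power_mono) auto
    then have s: "(norm (?a + ?b))^2 \<ge> 4 * d^2" by (simp add: power_mult_distrib)
    have "norm ?a \<le> d + inverse (real (Suc k))" using yl[of k] by simp
    then have ha: "(norm ?a)^2 \<le> (d + inverse (real (Suc k)))^2" by (simp add: power_mono)
    have "norm ?b \<le> d + inverse (real (Suc j))" using yl[of j] by simp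
    then have hb: "(norm ?b)^2 \<le> (d + inverse (real (Suc j)))^2" by (simp add: power_mono)
    have "(norm (?a - ?b))^2 = (norm (y j - y k))^2" by (simp add: algebra_simps)
    then show ?thesis using id s ha hb by linarith
  qed
  have "Cauchy y"
  proof (rule metric_CauchyI)
    fix \<epsilon> :: real assume e: "\<epsilon> > 0"
    define e where "e = min 1 (\<epsilon>^2 / (8*d+8))"
    have ep: "e > 0" using e d0 by (simp add: e_def)
    obtain N where N: "inverse (real (Suc N)) < e" using reals_Archimedean ep by blast
    have key: "4*(2*d*e + e^2) < \<epsilon>^2"
    proof -
      have "e \<le> 1" by (simp add: e_def)
      then have "e*e \<le> e*1" using ep by (intro mult_left_mono) auto
      then have "e^2 \<le> e" by (simp add: power2_eq_square)
      then have "2*d*e + e^2 \<le> e*(2*d+1)" by (simp add: algebra_simps)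
      also have "\<dots> \<le> (\<epsilon>^2 / (8*d+8))*(2*d+1)" using d0 by (intro mult_right_mono) (auto simp: e_def)
      also have "\<dots> < \<epsilon>^2/4" using d0 e by (simp add: field_simps)
      finally show ?thesis by simp
    qed
    show "\<exists>M. \<forall>m\<ge>M. \<forall>n\<ge>M. dist (y m) (y n) < \<epsilon>"
    proof (intro exI allI impI)
      fix j k assume jk: "N \<le> j" "N \<le> k"
      have "inverse (real (Suc j)) \<le> inverse (real (Suc N))" using jk
        by (intro le_imp_inverse_le) auto
      then have ij: "inverse (real (Suc j)) \<le> e" using N by linarith
      have "inverse (real (Suc k)) \<le> inverse (real (Suc N))" using jk
        by (intro le_imp_inverse_le) auto
      then have ik: "inverse (real (Suc k)) \<le> e" using N by linarith
      have "(d + inverse (real (Suc j)))^2 \<le> (d+e)^2"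
        using ij d0 by (intro power_mono) auto
      moreover have "(d + inverse (real (Suc k)))^2 \<le> (d+e)^2"
        using ik d0 by (intro power_mono) auto
      ultimately have "(norm (y j - y k))^2 \<le> 4*(2*d*e + e^2)"
        using para[of j k] by (simp add: power2_eq_square algebra_simps)
      then have "(norm (y j - y k))^2 < \<epsilon>^2" using key by linarith
      then show "dist (y j) (y k) < \<epsilon>" using e
        by (simp add: dist_norm power_less_imp_less_base)
    qed
  qed
  then obtain p where yp: "y \<longlonglongrightarrow> p" using convergent_eq_Cauchy by blast
  have pM: "p \<in> M" using M(1) yM yp closed_sequentially by blast
  have "norm (x - p) \<le> d"
  proof (rule LIMSEQ_le)
    show "(\<lambda>k. norm (x - y k)) \<longlonglongrightarrow> norm (x - p)" by (intro tendsto_intros yp)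
    show "(\<lambda>k. d + inverse (real (Suc k))) \<longlonglongrightarrow> d"
      using tendsto_add[OF tendsto_const LIMSEQ_inverse_real_of_nat, of d] by simp
    show "\<exists>N. \<forall>n\<ge>N. norm (x - y n) \<le> d + inverse (real (Suc n))" using yl less_imp_le by blast
  qed
  then have np: "norm (x - p) = d" using dle[OF pM] by simp
  show ?thesis
  proof (intro bexI[OF _ pM] ballI)
    fix m assume mM: "m \<in> M"
    define v where "v = x - p"
    define c where "c = v \<bullet> m"
    show "(x - p) \<bullet> m = 0"
    proof (cases "m = 0")
      case True then show ?thesis by simp
    next
      case False
      then have mm: "m \<bullet> m > 0" by simp
      define t where "t = c / (m \<bullet> m)"
      have "p + t *\<^sub>R m \<in> M" using M(2) pM mM by (simp add: subspace_add subspace_scale)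
      then have "d \<le> norm (x - (p + t *\<^sub>R m))" by (rule dle)
      then have "d^2 \<le> (norm (v - t *\<^sub>R m))^2" using d0 by (simp add: v_def algebra_simps power_mono)
      also have "\<dots> = (v - t *\<^sub>R m) \<bullet> (v - t *\<^sub>R m)" by (rule power2_norm_eq_inner)
      also have "\<dots> = v \<bullet> v - 2 * t * c + t^2 * (m \<bullet> m)"
        by (simp add: inner_diff_left inner_diff_right c_def inner_commute algebra_simps power2_eq_square)
      also have "\<dots> = d^2 - c^2 / (m \<bullet> m)"
        using mm np by (simp add: t_def v_def power2_norm_eq_inner[symmetric] field_simps power2_eq_square)
      finally have "c^2 / (m \<bullet> m) \<le> 0" by simp
      then have "c^2 \<le> 0" using mm by (simp add: divide_le_0_iff)
      then have "c = 0" by simp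
      then show ?thesis by (simp add: c_def v_def)
    qed
  qed
qed

definition onset :: "'a::real_inner set \<Rightarrow> bool" where
  "onset B \<longleftrightarrow> finite B \<and> (\<forall>x\<in>B. \<forall>y\<in>B. x \<bullet> y = (if x = y then 1 else 0))"

lemma onset_coef:
  assumes "onset B" "b \<in> B"
  shows "(\<Sum>v\<in>B. u v *\<^sub>R v) \<bullet> b = u b"
proof -
  have "(\<Sum>v\<in>B. u v *\<^sub>R v) \<bullet> b = (\<Sum>v\<in>B. u v * (v \<bullet> b))" by (simp add: inner_sum_left)
  also have "\<dots> = (\<Sum>v\<in>B. if v = b then u v else 0)"
    using assms by (intro sum.cong) (auto simp: onset_def)
  also have "\<dots> = u b" using assms by (simp add: onset_def)
  finally show ?thesis .
qed

lemma onset_expand: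
  assumes "onset B" "s \<in> span B"
  shows "s = (\<Sum>b\<in>B. (s \<bullet> b) *\<^sub>R b)"
proof -
  have fin: "finite B" using assms by (simp add: onset_def)
  obtain u where s: "s = (\<Sum>v\<in>B. u v *\<^sub>R v)" using assms(2) span_finite[OF fin] by auto
  have "\<And>b. b \<in> B \<Longrightarrow> s \<bullet> b = u b" using onset_coef[OF assms(1)] s by simp
  then show ?thesis using s by (auto intro: sum.cong)
qed

lemma gs:
  assumes M: "subspace M" and T: "finite T" "T \<subseteq> M" and B: "onset B" "B \<subseteq> M"
  shows "\<exists>B'. onset B' \<and> B \<subseteq> B' \<and> B' \<subseteq> M \<and> T \<subseteq> span B'"
  using T B
proof (induction T arbitrary: B rule: finite_induct)
  case empty then show ?case by blast
next
  case (insert a T B)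
  have fin: "finite B" using insert by (simp add: onset_def)
  define a' where "a' = a - (\<Sum>b\<in>B. (a \<bullet> b) *\<^sub>R b)"
  have aM: "a \<in> M" using insert by auto
  have a'M: "a' \<in> M" unfolding a'_def using M aM insert.prems
    by (intro subspace_diff subspace_sum subspace_scale) auto
  have orth: "a' \<bullet> b = 0" if "b \<in> B" for b
    using onset_coef[OF insert.prems(2) that, of "\<lambda>b. a \<bullet> b"] by (simp add: a'_def inner_diff_left)
  have "\<exists>B1. onset B1 \<and> B \<subseteq> B1 \<and> B1 \<subseteq> M \<and> a \<in> span B1"
  proof (cases "a' = 0")
    case True
    then have "a = (\<Sum>b\<in>B. (a \<bullet> b) *\<^sub>R b)" by (simp add: a'_def)
    also have "\<dots> \<in> span B" by (intro span_sum span_scale span_base)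
    finally show ?thesis using insert.prems(2,3) by (intro exI[of _ B]) auto
  next
    case False
    define w where "w = a' /\<^sub>R norm a'"
    have ww: "w \<bullet> w = 1" using False by (simp add: w_def inner_commute power2_norm_eq_inner[symmetric] power2_eq_square)
    have wb: "w \<bullet> b = 0" if "b \<in> B" for b using orth[OF that] by (simp add: w_def)
    have wB: "w \<notin> B" using wb ww by force
    have wb': "b \<bullet> w = 0" if "b \<in> B" for b using wb[OF that] by (simp add: inner_commute)
    have onw: "onset (insert w B)" unfolding onset_def
    proof (intro conjI ballI)
      show "finite (insert w B)" using fin by simp
      fix x y assume "x \<in> insert w B" "y \<in> insert w B"
      then show "x \<bullet> y = (if x = y then 1 else 0)"
        using insert.prems(2) wb wb' ww wB unfolding onset_def by auto
    qed
    have wM: "w \<in> M" using a'M M by (simp add: w_def subspace_scale)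
    have nw: "norm a' *\<^sub>R w = a'" using False by (simp add: w_def)
    have ae: "a = norm a' *\<^sub>R w + (\<Sum>b\<in>B. (a \<bullet> b) *\<^sub>R b)" unfolding nw by (simp add: a'_def)
    have s1: "w \<in> span (insert w B)" by (rule span_base) simp
    have "(\<Sum>b\<in>B. (a \<bullet> b) *\<^sub>R b) \<in> span B" by (intro span_sum span_scale span_base)
    then have s2: "(\<Sum>b\<in>B. (a \<bullet> b) *\<^sub>R b) \<in> span (insert w B)"
      using span_mono[of B "insert w B"] by blast
    have asp: "a \<in> span (insert w B)" by (subst ae) (intro span_add span_scale s1 s2)
    have "insert w B \<subseteq> M" using wM insert.prems(3) by simp
    then show ?thesis using onw asp by (intro exI[of _ "insert w B"]) auto
  qed
  then obtain B1 where B1: "onset B1" "B \<subseteq> B1" "B1 \<subseteq> M" "a \<in> span B1" by blast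
  have TM: "T \<subseteq> M" using insert.prems(1) by simp
  obtain B' where B': "onset B'" "B1 \<subseteq> B'" "B' \<subseteq> M" "T \<subseteq> span B'"
    using insert.IH[OF TM B1(1,3)] by blast
  have "a \<in> span B'" using B1(4) span_mono[OF B'(2)] by blast
  then have "insert a T \<subseteq> span B'" using B'(4) by simp
  then show ?case using B' B1(2) by (intro exI[of _ B']) auto
qed

definition FF :: "'a::real_inner set \<Rightarrow> 'a set \<Rightarrow> 'a set" where
  "FF M B = {x + y |x y. x \<in> orthogonal_comp M \<and> y \<in> span B}"

lemma oc_iff: "x \<in> orthogonal_comp M \<longleftrightarrow> (\<forall>y\<in>M. y \<bullet> x = 0)"
  by (simp add: orthogonal_comp_def orthogonal_def)

lemma closed_oc: "closed (orthogonal_comp M)"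
proof -
  have "orthogonal_comp M = (\<Inter>y\<in>M. {x. y \<bullet> x = 0})" by (auto simp: oc_iff)
  then show ?thesis by (simp add: closed_INT closed_hyperplane)
qed

lemma subspace_FF: "subspace (FF M B)"
  unfolding FF_def by (intro subspace_sums subspace_orthogonal_comp subspace_span)

lemma span_sub_M: "subspace M \<Longrightarrow> B \<subseteq> M \<Longrightarrow> span B \<subseteq> M"
  by (rule span_minimal)

lemma closed_FF:
  assumes M: "subspace M" and B: "onset B" "B \<subseteq> M"
  shows "closed (FF M B)"
proof -
  define Q where "Q y = (\<Sum>b\<in>B. (y \<bullet> b) *\<^sub>R b)" for y
  have "FF M B = (\<lambda>y. y - Q y) -` orthogonal_comp M"
  proof (intro set_eqI iffI)
    fix y assume "y \<in> FF M B"
    then obtain m s where y: "y = m + s" "m \<in> orthogonal_comp M" "s \<in> span B" by (auto simp: FF_def)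
    have "Q m = 0" unfolding Q_def using y(2) B(2)
      by (intro sum.neutral) (auto simp: oc_iff inner_commute)
    moreover have "Q s = s" unfolding Q_def using onset_expand[OF B(1) y(3)] by simp
    moreover have "Q y = Q m + Q s" unfolding Q_def y(1)
      by (simp add: inner_add_left scaleR_add_left sum.distrib)
    ultimately show "y \<in> (\<lambda>y. y - Q y) -` orthogonal_comp M" using y by simp
  next
    fix y assume "y \<in> (\<lambda>y. y - Q y) -` orthogonal_comp M"
    moreover have "Q y \<in> span B" unfolding Q_def by (intro span_sum span_scale span_base)
    ultimately show "y \<in> FF M B" unfolding FF_def by force
  qed
  moreover have "closed ((\<lambda>y. y - Q y) -` orthogonal_comp M)"
    by (intro continuous_closed_vimage closed_oc) (simp add: Q_def continuous_intros)
  ultimately show ?thesis by simp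
qed

lemma FF_mono: "B \<subseteq> B' \<Longrightarrow> FF M B \<subseteq> FF M B'"
  unfolding FF_def using span_mono by blast

lemma FF_empty: "FF M {} = orthogonal_comp M"
  unfolding FF_def by force

lemma span_FF: "span B \<subseteq> FF M B"
  unfolding FF_def by (force intro: subspace_0[OF subspace_orthogonal_comp])

lemma FF_inter:
  assumes M: "subspace M" and B: "B \<subseteq> M"
  shows "FF M B \<inter> M = span B"
proof (intro set_eqI iffI)
  fix x assume x: "x \<in> FF M B \<inter> M"
  then obtain m s where y: "x = m + s" "m \<in> orthogonal_comp M" "s \<in> span B" by (auto simp: FF_def)
  have sM: "s \<in> M" using span_sub_M[OF M B] y(3) by blast
  have "m \<in> M" using x y(1) sM M by (metis IntD2 add_diff_cancel_right' subspace_diff)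
  then have "m \<bullet> m = 0" using y(2) by (simp add: oc_iff)
  then show "x \<in> span B" using y by simp
next
  fix x assume "x \<in> span B"
  then show "x \<in> FF M B \<inter> M" using span_FF span_sub_M[OF M B] by blast
qed

lemma FF_incr:
  assumes M: "subspace M" and A: "onset A" "A \<subseteq> B" and B: "onset B" "B \<subseteq> M"
  shows "FF M B \<inter> orthogonal_comp (FF M A) = span (B - A)"
proof (intro set_eqI iffI)
  fix x assume x: "x \<in> FF M B \<inter> orthogonal_comp (FF M A)"
  then obtain m s where y: "x = m + s" "m \<in> orthogonal_comp M" "s \<in> span B" by (auto simp: FF_def)
  have sM: "s \<in> M" using span_sub_M[OF M B(2)] y(3) by blast
  have mA: "m \<in> FF M A" using y(2) unfolding FF_def by (force intro: span_0)
  have "m \<bullet> x = 0" using x mA by (simp add: oc_iff)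
  moreover have "m \<bullet> s = 0" using y(2) sM unfolding oc_iff by (metis inner_commute)
  ultimately have "m \<bullet> m = 0" using y(1) by (simp add: inner_add_right)
  then have xs: "x = s" using y by simp
  have aA: "x \<bullet> a = 0" if "a \<in> A" for a
  proof -
    have "a \<in> FF M A" using span_FF[of A M] span_base[OF that] by blast
    then show ?thesis using x by (simp add: oc_iff inner_commute)
  qed
  have finB: "finite B" using B by (simp add: onset_def)
  have "x = (\<Sum>b\<in>B. (x \<bullet> b) *\<^sub>R b)" using onset_expand[OF B(1)] y(3) xs by simp
  also have "\<dots> = (\<Sum>b\<in>B - A. (x \<bullet> b) *\<^sub>R b) + (\<Sum>b\<in>A. (x \<bullet> b) *\<^sub>R b)"
    using sum.subset_diff[OF A(2) finB] by simp
  also have "(\<Sum>b\<in>A. (x \<bullet> b) *\<^sub>R b) = 0" using aA by (intro sum.neutral) auto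
  finally have "x = (\<Sum>b\<in>B - A. (x \<bullet> b) *\<^sub>R b)" by simp
  also have "\<dots> \<in> span (B - A)" by (intro span_sum span_scale span_base)
  finally show "x \<in> span (B - A)" .
next
  fix x assume x: "x \<in> span (B - A)"
  have xB: "x \<in> span B" using x span_mono[of "B - A" B] by blast
  have xM: "x \<in> M" using span_sub_M[OF M B(2)] xB by blast
  have "y \<bullet> x = 0" if "y \<in> FF M A" for y
  proof -
    obtain m s where y: "y = m + s" "m \<in> orthogonal_comp M" "s \<in> span A" using \<open>y \<in> FF M A\<close> by (auto simp: FF_def)
    have "m \<bullet> x = 0" using y(2) xM unfolding oc_iff by (metis inner_commute)
    moreover have "orthogonal s x"
    proof (rule orthogonal_to_span[OF x])
      fix b assume b: "b \<in> B - A"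
      have "orthogonal b s"
      proof (rule orthogonal_to_span[OF y(3)])
        fix a assume "a \<in> A"
        then show "orthogonal b a" using b A(2) B(1) by (auto simp: onset_def orthogonal_def)
      qed
      then show "orthogonal s b" by (simp add: orthogonal_commute)
    qed
    ultimately show ?thesis using y(1) by (simp add: inner_add_left orthogonal_def)
  qed
  then have "x \<in> orthogonal_comp (FF M A)" by (simp add: oc_iff)
  moreover have "x \<in> FF M B" using span_FF xB by blast
  ultimately show "x \<in> FF M B \<inter> orthogonal_comp (FF M A)" by blast
qed

theorem lemma2p1:
  fixes N :: "'a::{real_inner, complete_space} \<Rightarrow> real"
    and M0 :: "'a set"
  assumes sep: "separable_space (euclidean :: 'a topology)"
    and infdim: "\<not> (\<exists>B. finite B \<and> span B = (UNIV :: 'a set))"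
    and mn: "measurable_norm N"
    and M0: "closed M0" "subspace M0" "\<not> (\<exists>B. finite B \<and> span B = M0)"
  shows "\<exists>F :: nat \<Rightarrow> 'a set. measurably_adapted N F \<and> F 0 = orthogonal_comp M0 \<and>
           F 0 \<subseteq> F 1 \<and> fin_dim_subspace (F 1 \<inter> M0) \<and>
           span (\<Union>n\<in>{1..}. F n \<inter> orthogonal_comp (F (n - 1))) \<subseteq> M0 \<and>
           M0 \<subseteq> closure (span (\<Union>n\<in>{1..}. F n \<inter> orthogonal_comp (F (n - 1))))"
proof -
  define P where "P x = (SOME p. p \<in> M0 \<and> (\<forall>m\<in>M0. (x - p) \<bullet> m = 0))" for x
  have Ph: "P x \<in> M0 \<and> (\<forall>m\<in>M0. (x - P x) \<bullet> m = 0)" for x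
  proof -
    have "\<exists>p. p \<in> M0 \<and> (\<forall>m\<in>M0. (x - p) \<bullet> m = 0)" using proj_exists[OF M0(1,2)] by blast
    then show ?thesis unfolding P_def by (rule someI_ex)
  qed
  have P1: "P x \<in> M0" for x using Ph by blast
  have P2: "x - P x \<in> orthogonal_comp M0" for x using Ph[of x] unfolding oc_iff by (metis inner_commute)
  have Pcontr: "norm (P x - m) \<le> norm (x - m)" if "m \<in> M0" for x m
  proof -
    have w: "P x - m \<in> M0" using P1 that M0(2) subspace_diff by blast
    have "orthogonal (P x - m) (x - P x)" using P2[of x] w by (simp add: oc_iff orthogonal_def)
    then have "(norm ((P x - m) + (x - P x)))^2 = (norm (P x - m))^2 + (norm (x - P x))^2"
      by (rule norm_add_Pythagorean)
    moreover have "(P x - m) + (x - P x) = x - m" by simp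
    ultimately have "(norm (P x - m))^2 \<le> (norm (x - m))^2" by simp
    then show ?thesis by (rule power2_le_imp_le) simp
  qed
  have "\<exists>C. countable C \<and> C \<subseteq> topspace euclidean \<and> (euclidean :: 'a topology) closure_of C = topspace euclidean"
    by (rule sep[unfolded separable_space_def])
  then obtain C where C0: "countable C" "(euclidean :: 'a topology) closure_of C = topspace euclidean"
    by blast
  have C: "countable C" "closure C = UNIV" using C0 by simp_all
  have Cne: "C \<noteq> {}" using C(2) by (metis closure_empty empty_not_UNIV)
  define d where "d = from_nat_into C"
  have dense: "\<exists>k. dist (d k) x < e" if e: "e > 0" for x e
  proof -
    have "x \<in> closure C" using C by simp
    then obtain y where "y \<in> C" "dist y x < e" using e closure_approachable by blast
    then show ?thesis using range_from_nat_into[OF Cne C(1)] unfolding d_def by (metis rangeE)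
  qed
  have "\<forall>n::nat. \<exists>G. fin_dim_subspace G \<and> (\<forall>F1. fin_dim_subspace F1 \<and> F1 \<subseteq> orthogonal_comp G \<longrightarrow>
           gauss F1 {v \<in> F1. N v > 1 / 2 ^ n} < 1 / 2 ^ n)"
  proof
    fix n :: nat
    have "(1::real) / 2 ^ n > 0" by simp
    then show "\<exists>G. fin_dim_subspace G \<and> (\<forall>F1. fin_dim_subspace F1 \<and> F1 \<subseteq> orthogonal_comp G \<longrightarrow>
           gauss F1 {v \<in> F1. N v > 1 / 2 ^ n} < 1 / 2 ^ n)"
      using mn unfolding measurable_norm_def by blast
  qed
  then obtain G where G1: "\<And>n. fin_dim_subspace (G n)"
    and G2: "\<And>n F1. fin_dim_subspace F1 \<Longrightarrow> F1 \<subseteq> orthogonal_comp (G n) \<Longrightarrow>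
             gauss F1 {v \<in> F1. N v > 1 / 2 ^ n} < 1 / 2 ^ n"
    by metis
  obtain S where S1: "\<And>n. finite (S n)" and S2: "\<And>n. span (S n) = G n"
    using G1 unfolding fin_dim_subspace_def by metis
  have new: "\<exists>m. m \<in> M0 \<and> m \<notin> span B" if "finite B" "B \<subseteq> M0" for B
  proof (rule ccontr)
    assume "\<not> ?thesis" then have "M0 \<subseteq> span B" by auto
    moreover have "span B \<subseteq> M0" using span_sub_M[OF M0(2) that(2)] .
    ultimately show False using M0(3) that(1) by blast
  qed
  define T where "T n B = insert (SOME m. m \<in> M0 \<and> m \<notin> span B) (insert (P (d n)) (P ` S (Suc n)))"
    for n B
  define step where "step n B = (SOME B'. onset B' \<and> B \<subseteq> B' \<and> B' \<subseteq> M0 \<and> T n B \<subseteq> span B')" for n B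
  have stepP: "onset (step n B) \<and> B \<subseteq> step n B \<and> step n B \<subseteq> M0 \<and> T n B \<subseteq> span (step n B)"
    if B: "onset B" "B \<subseteq> M0" for n B
  proof -
    have finB: "finite B" using B by (simp add: onset_def)
    have "(SOME m. m \<in> M0 \<and> m \<notin> span B) \<in> M0" using someI_ex[OF new[OF finB B(2)]] by blast
    then have TM: "T n B \<subseteq> M0" using P1 by (auto simp: T_def)
    have fin: "finite (T n B)" using S1 by (simp add: T_def)
    have "\<exists>B'. onset B' \<and> B \<subseteq> B' \<and> B' \<subseteq> M0 \<and> T n B \<subseteq> span B'"
      by (rule gs[OF M0(2) fin TM B])
    then show ?thesis unfolding step_def by (rule someI_ex)
  qed
  define Bs where "Bs = rec_nat {} step"
  have Bs0: "Bs 0 = {}" and BsS: "\<And>n. Bs (Suc n) = step n (Bs n)" by (simp_all add: Bs_def)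
  have inv: "onset (Bs n) \<and> Bs n \<subseteq> M0" for n
  proof (induction n)
    case 0 then show ?case by (simp add: Bs0 onset_def)
  next
    case (Suc n) then show ?case using stepP[of "Bs n" n] BsS by simp
  qed
  have on: "onset (Bs n)" and BM: "Bs n \<subseteq> M0" for n using inv by auto
  have mono: "Bs n \<subseteq> Bs (Suc n)" and Tsp: "T n (Bs n) \<subseteq> span (Bs (Suc n))" for n
    using stepP[OF on BM, of n] BsS by auto
  have strict: "Bs (Suc n) - Bs n \<noteq> {}" for n
  proof
    assume e: "Bs (Suc n) - Bs n = {}"
    define m0 where "m0 = (SOME m. m \<in> M0 \<and> m \<notin> span (Bs n))"
    have fin: "finite (Bs n)" using on by (simp add: onset_def)
    have "m0 \<notin> span (Bs n)" using someI_ex[OF new[OF fin BM]] unfolding m0_def by blast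
    moreover have "m0 \<in> span (Bs (Suc n))" using Tsp[of n] unfolding T_def m0_def by auto
    moreover have "span (Bs (Suc n)) \<subseteq> span (Bs n)" using e by (intro span_mono) blast
    ultimately show False by blast
  qed
  have PS: "P ` S (Suc n) \<subseteq> span (Bs (Suc n))" and Pd: "P (d n) \<in> span (Bs (Suc n))" for n
    using Tsp[of n] unfolding T_def by auto
  define F where "F n = FF M0 (Bs n)" for n
  have incr: "F (Suc n) \<inter> orthogonal_comp (F n) = span (Bs (Suc n) - Bs n)" for n
    unfolding F_def by (rule FF_incr[OF M0(2) on mono on BM])
  have incrM: "span (Bs (Suc n) - Bs n) \<subseteq> M0" for n
    using span_sub_M[OF M0(2)] BM by blast
  have incrfd: "fin_dim_subspace (F (Suc n) \<inter> orthogonal_comp (F n))" for n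
    unfolding incr fin_dim_subspace_def using on[of "Suc n"]
    by (auto simp: onset_def subspace_span)
  have approx: "\<exists>k. \<exists>s\<in>span (Bs (Suc k)). dist s m < e" if mM: "m \<in> M0" and e: "e > 0" for m e
  proof -
    obtain k where k: "dist (d k) m < e" using dense[OF e] by blast
    have "dist (P (d k)) m \<le> dist (d k) m" using Pcontr[OF mM] by (simp add: dist_norm)
    then have "dist (P (d k)) m < e" using k by linarith
    then show ?thesis using Pd[of k] by blast
  qed
  let ?U = "\<Union>n\<in>{1..}. F n \<inter> orthogonal_comp (F (n - 1))"
  have UM: "?U \<subseteq> M0"
  proof
    fix x assume "x \<in> ?U"
    then obtain n where n: "n \<ge> 1" "x \<in> F n \<inter> orthogonal_comp (F (n - 1))" by auto
    then obtain n' where "n = Suc n'" by (metis Suc_diff_1 less_le_trans zero_less_one)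
    then show "x \<in> M0" using n incr[of n'] incrM[of n'] by auto
  qed
  have spB: "span (Bs k) \<subseteq> span ?U" for k
  proof (induction k)
    case 0 then show ?case by (simp add: Bs0 span_0)
  next
    case (Suc k)
    have "Bs (Suc k) \<subseteq> span ?U"
    proof
      fix b assume b: "b \<in> Bs (Suc k)"
      show "b \<in> span ?U"
      proof (cases "b \<in> Bs k")
        case True then show ?thesis using Suc span_base[of b "Bs k"] by blast
      next
        case False
        then have "b \<in> F (Suc k) \<inter> orthogonal_comp (F k)" using b incr[of k] span_base[of b] by auto
        then have "b \<in> ?U" by force
        then show ?thesis by (rule span_base)
      qed
    qed
    then show ?case by (rule span_minimal[OF _ subspace_span])
  qed
  show ?thesis
  proof (intro exI[of _ F] conjI)
    show "measurably_adapted N F" unfolding measurably_adapted_def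
    proof (intro conjI allI impI)
      fix n :: nat
      show "closed (F n)" unfolding F_def by (rule closed_FF[OF M0(2) on BM])
      show "subspace (F n)" unfolding F_def by (rule subspace_FF)
      show "F n \<subseteq> F (Suc n)" unfolding F_def by (rule FF_mono[OF mono])
      show "fin_dim_subspace (F (Suc n) \<inter> orthogonal_comp (F n))" by (rule incrfd)
      show "1 \<le> dim (F (Suc n) \<inter> orthogonal_comp (F n))"
      proof -
        define D where "D = Bs (Suc n) - Bs n"
        have onD: "\<forall>x\<in>D. \<forall>y\<in>D. x \<bullet> y = (if x = y then 1 else 0)" and finD: "finite D"
          using on[of "Suc n"] by (auto simp: onset_def D_def)
        have "pairwise orthogonal D" unfolding pairwise_def orthogonal_def using onD by auto
        moreover have "0 \<notin> D" using onD by force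
        ultimately have ind: "independent D" by (rule pairwise_orthogonal_independent)
        have "card D = dim (span D)" by (rule basis_card_eq_dim[OF span_superset order_refl ind])
        moreover have "D \<noteq> {}" using strict[of n] by (simp add: D_def)
        then have "card D \<ge> 1" using finD by (simp add: Suc_le_eq card_gt_0_iff)
        ultimately show ?thesis unfolding incr D_def by simp
      qed
    next
      fix n :: nat assume n1: "n \<ge> 1"
      then obtain n' where nn: "n = Suc n'" by (metis Suc_diff_1 less_le_trans zero_less_one)
      show "gauss (F (Suc n) \<inter> orthogonal_comp (F n))
              {v \<in> F (Suc n) \<inter> orthogonal_comp (F n). N v > 1 / 2 ^ n} < 1 / 2 ^ n"
      proof (rule G2[OF incrfd])
        show "F (Suc n) \<inter> orthogonal_comp (F n) \<subseteq> orthogonal_comp (G n)"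
        proof
          fix v assume v: "v \<in> F (Suc n) \<inter> orthogonal_comp (F n)"
          have vM: "v \<in> M0" using v incr incrM by blast
          have "orthogonal v y" if y: "y \<in> S n" for y
          proof -
            have "P y \<in> span (Bs n)" using PS[of n'] y nn by auto
            then have "P y \<in> F n" using span_FF unfolding F_def by blast
            then have a: "P y \<bullet> v = 0" using v by (simp add: oc_iff)
            have b: "v \<bullet> (y - P y) = 0" using P2[of y] vM by (simp add: oc_iff)
            have "v \<bullet> y = v \<bullet> P y + v \<bullet> (y - P y)" by (simp add: inner_diff_right)
            then show ?thesis using a b by (simp add: orthogonal_def inner_commute)
          qed
          then have "orthogonal v g" if "g \<in> G n" for g
            using orthogonal_to_span[of g "S n" v] that S2 by blast
          then show "v \<in> orthogonal_comp (G n)"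
            by (simp add: orthogonal_comp_def orthogonal_commute)
        qed
      qed
    next
      show "closure (\<Union>n\<in>{1..}. F n) = UNIV"
      proof (intro set_eqI iffI)
        fix x :: 'a
        show "x \<in> closure (\<Union>n\<in>{1..}. F n)" unfolding closure_approachable
        proof (intro allI impI)
          fix e :: real assume e: "e > 0"
          obtain k s where s: "s \<in> span (Bs (Suc k))" "dist s (P x) < e" using approx[OF P1 e] by blast
          have "(x - P x) + s \<in> F (Suc k)" unfolding F_def FF_def using P2 s(1) by blast
          moreover have "dist ((x - P x) + s) x = dist s (P x)" by (simp add: dist_norm algebra_simps)
          ultimately show "\<exists>y\<in>\<Union>n\<in>{1..}. F n. dist y x < e" using s(2)
            by (intro bexI[of _ "(x - P x) + s"]) auto
        qed
      qed simp
    qed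
    show "F 0 = orthogonal_comp M0" unfolding F_def Bs0 by (rule FF_empty)
    show "F 0 \<subseteq> F 1" unfolding F_def using FF_mono[OF mono[of 0]] by simp
    show "fin_dim_subspace (F 1 \<inter> M0)"
      unfolding F_def FF_inter[OF M0(2) BM] fin_dim_subspace_def using on[of 1]
      by (auto simp: onset_def subspace_span)
    show "span ?U \<subseteq> M0" by (rule span_minimal[OF UM M0(2)])
    show "M0 \<subseteq> closure (span ?U)"
    proof
      fix m assume m: "m \<in> M0"
      show "m \<in> closure (span ?U)" unfolding closure_approachable
      proof (intro allI impI)
        fix e :: real assume "e > 0"
        then obtain k s where "s \<in> span (Bs (Suc k))" "dist s m < e" using approx[OF m] by blast
        then show "\<exists>y\<in>span ?U. dist y m < e" using spB by blast
      qed
    qed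
  qed
qed

end
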